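(* Let $h$ be a reduced function, $n\ge4$, and let $E^{(n)}$ and $\mathcal E^{(n)}$ be defined on pure states by $$E^{(n)}(|\psi\rangle)=\frac12\sum_{i=1}^n h(\rho^{A_i}),\qquad \mathcal E^{(n)}(|\psi\rangle)=\frac12\sum_{S\in\mathcal T_n}h(\rho^S),$$ where $\mathcal T_n$ is the set of nonempty subsets $S\subseteq\{A_1,\dots,A_n\}$ with $|S|<n/2$ together with (for even $n$) those with $|S|=n/2$ and $A_n\notin S$. Then for every pure state $|\psi\rangle\in\mathcal H^{A_1\cdots A_n}$, $E^{(n)}(|\psi\rangle)\le\mathcal E^{(n)}(|\psi\rangle)$, with strict inequality if and only if $|\psi\rangle$ is not fully separable, i.e. not of the form $|\psi_1\rangle^{A_1}\otimes\cdots\otimes|\psi_n\rangle^{A_n}$.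
   Context: All Hilbert spaces are finite-dimensional; $\rho^X$ denotes the reduced state of $|\psi\rangle$ on the set $X$ of parties. Reduced function: a function $h$ from density matrices (of any finite dimension) to $[0,\infty)$ that is concave, depends only on the multiset of nonzero eigenvalues of its argument, and satisfies $h(\rho)=0$ iff $\rho$ is pure. *)

theory Defs
  imports "Jordan_Normal_Form.Char_Poly" "HOL-Computational_Algebra.Polynomial"
begin

definition is_density :: "nat \<Rightarrow> complex mat \<Rightarrow> bool" where
  "is_density m A \<longleftrightarrow> A \<in> carrier_mat m m
     \<and> (\<forall>i<m. \<forall>j<m. A $$ (i,j) = cnj (A $$ (j,i)))
     \<and> (\<forall>v. dim_vec v = m \<longrightarrow>
           0 \<le> Re (\<Sum>i<m. \<Sum>j<m. cnj (v $ i) * A $$ (i,j) * v $ j))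
     \<and> (\<Sum>i<m. A $$ (i,i)) = 1"

definition is_pure_density :: "nat \<Rightarrow> complex mat \<Rightarrow> bool" where
  "is_pure_density m A \<longleftrightarrow> is_density m A
     \<and> (\<exists>v. dim_vec v = m \<and> A = mat m m (\<lambda>(i,j). v $ i * cnj (v $ j)))"

definition same_nonzero_spectrum :: "complex mat \<Rightarrow> complex mat \<Rightarrow> bool" where
  "same_nonzero_spectrum A B \<longleftrightarrow>
     (\<forall>a. a \<noteq> 0 \<longrightarrow> order a (char_poly A) = order a (char_poly B))"

definition reduced_function :: "(complex mat \<Rightarrow> real) \<Rightarrow> bool" where
  "reduced_function h \<longleftrightarrow>
     (\<forall>m A. is_density m A \<longrightarrow> 0 \<le> h A)
   \<and> (\<forall>m A B t. is_density m A \<longrightarrow> is_density m B \<longrightarrow> 0 \<le> t \<longrightarrow> t \<le> 1 \<longrightarrow>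
         t * h A + (1 - t) * h B \<le> h (complex_of_real t \<cdot>\<^sub>m A + complex_of_real (1 - t) \<cdot>\<^sub>m B))
   \<and> (\<forall>m k A B. is_density m A \<longrightarrow> is_density k B \<longrightarrow> same_nonzero_spectrum A B \<longrightarrow> h A = h B)
   \<and> (\<forall>m A. is_density m A \<longrightarrow> (h A = 0 \<longleftrightarrow> is_pure_density m A))"

text \<open>Mixed-radix encoding of a local-index assignment x (x i < d i for i in S)
  into a basis index of the tensor product over the parties in S.\<close>
definition radix :: "(nat \<Rightarrow> nat) \<Rightarrow> nat set \<Rightarrow> nat \<Rightarrow> nat" where
  "radix d S i = (\<Prod>j\<in>{j\<in>S. j < i}. d j)"

definition dimS :: "(nat \<Rightarrow> nat) \<Rightarrow> nat set \<Rightarrow> nat" where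
  "dimS d S = (\<Prod>j\<in>S. d j)"

definition encode :: "(nat \<Rightarrow> nat) \<Rightarrow> nat set \<Rightarrow> (nat \<Rightarrow> nat) \<Rightarrow> nat" where
  "encode d S x = (\<Sum>i\<in>S. x i * radix d S i)"

definition decode :: "(nat \<Rightarrow> nat) \<Rightarrow> nat set \<Rightarrow> nat \<Rightarrow> nat \<Rightarrow> nat" where
  "decode d S k i = (k div radix d S i) mod d i"

definition is_pure_state :: "nat \<Rightarrow> (nat \<Rightarrow> nat) \<Rightarrow> complex vec \<Rightarrow> bool" where
  "is_pure_state n d \<psi> \<longleftrightarrow> dim_vec \<psi> = dimS d {0..<n}
     \<and> (\<Sum>k<dim_vec \<psi>. (cmod (\<psi> $ k))\<^sup>2) = 1"

text \<open>Reduced state rho^S = Tr_{complement of S} |psi><psi|, as a dimS d S square matrix.\<close>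
definition reduced_state :: "nat \<Rightarrow> (nat \<Rightarrow> nat) \<Rightarrow> complex vec \<Rightarrow> nat set \<Rightarrow> complex mat" where
  "reduced_state n d \<psi> S =
     (let C = {0..<n} - S;
          idx = (\<lambda>k c. encode d {0..<n}
                   (\<lambda>i. if i \<in> S then decode d S k i else decode d C c i))
      in mat (dimS d S) (dimS d S)
           (\<lambda>(k,l). \<Sum>c<dimS d C. \<psi> $ (idx k c) * cnj (\<psi> $ (idx l c))))"

definition fully_separable :: "nat \<Rightarrow> (nat \<Rightarrow> nat) \<Rightarrow> complex vec \<Rightarrow> bool" where
  "fully_separable n d \<psi> \<longleftrightarrow>
     (\<exists>\<phi> :: nat \<Rightarrow> complex vec. (\<forall>i<n. dim_vec (\<phi> i) = d i) \<and>
        (\<forall>k<dimS d {0..<n}. \<psi> $ k = (\<Prod>i<n. \<phi> i $ decode d {0..<n} k i)))"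

text \<open>The family T_n (parties A_1..A_n are 0..n-1, so A_n is n-1).\<close>
definition T_family :: "nat \<Rightarrow> nat set set" where
  "T_family n = {S. S \<subseteq> {0..<n} \<and> S \<noteq> {} \<and>
                   (2 * card S < n \<or> (2 * card S = n \<and> n - 1 \<notin> S))}"

definition E_single :: "(complex mat \<Rightarrow> real) \<Rightarrow> nat \<Rightarrow> (nat \<Rightarrow> nat) \<Rightarrow> complex vec \<Rightarrow> real" where
  "E_single h n d \<psi> = (1/2) * (\<Sum>i<n. h (reduced_state n d \<psi> {i}))"

definition E_family :: "(complex mat \<Rightarrow> real) \<Rightarrow> nat \<Rightarrow> (nat \<Rightarrow> nat) \<Rightarrow> complex vec \<Rightarrow> real" where
  "E_family h n d \<psi> = (1/2) * (\<Sum>S\<in>T_family n. h (reduced_state n d \<psi> S))"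

end

theory Submission
  imports Defs
begin



lemma encode_cong: "(\<And>i. i \<in> S \<Longrightarrow> x i = y i) \<Longrightarrow> encode d S x = encode d S y"
  unfolding encode_def by (rule sum.cong) auto

lemma radix_dvd:
  assumes "finite S" "i \<in> S"
  shows "radix d S i * d i dvd dimS d S"
proof -
  have "radix d S i * d i = prod d (insert i {j\<in>S. j < i})"
    unfolding radix_def using assms by (subst prod.insert) auto
  also have "\<dots> dvd dimS d S" unfolding dimS_def
    by (rule prod_dvd_prod_subset) (use assms in auto)
  finally show ?thesis .
qed

lemma decode_shift:
  assumes "finite S" "i \<in> S" "0 < radix d S i"
  shows "((a + m * dimS d S) div radix d S i) mod d i = (a div radix d S i) mod d i"
proof -
  obtain t where t: "dimS d S = radix d S i * d i * t" using radix_dvd[OF assms(1,2)] by (metis dvdE)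
  have e1: "a + m * dimS d S = a + (m * d i * t) * radix d S i" unfolding t by (simp add: ac_simps)
  have e2: "(a + (m * d i * t) * radix d S i) div radix d S i = a div radix d S i + (m * t) * d i"
  proof -
    have "(a + (m * d i * t) * radix d S i) div radix d S i = m * d i * t + a div radix d S i"
      using assms(3) by (intro div_mult_self1) simp
    then show ?thesis by (simp add: ac_simps)
  qed
  show ?thesis unfolding e1 e2 by (rule mod_mult_self1)
qed

lemma radix_pos: "finite S \<Longrightarrow> \<forall>j\<in>S. 0 < d j \<Longrightarrow> 0 < radix d S i"
  unfolding radix_def by (auto intro: prod_pos)

lemma dimS_pos: "finite S \<Longrightarrow> \<forall>j\<in>S. 0 < d j \<Longrightarrow> 0 < dimS d S"
  unfolding dimS_def by (auto intro: prod_pos)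

lemma insert_max_facts:
  assumes "finite S" "\<forall>a\<in>S. a < b"
  shows "\<And>i. i \<in> S \<Longrightarrow> radix d (insert b S) i = radix d S i"
    and "radix d (insert b S) b = dimS d S"
    and "dimS d (insert b S) = d b * dimS d S"
    and "encode d (insert b S) x = encode d S x + x b * dimS d S"
proof -
  have bS: "b \<notin> S" using assms by auto
  show "\<And>i. i \<in> S \<Longrightarrow> radix d (insert b S) i = radix d S i"
    unfolding radix_def using assms by (intro arg_cong[where f="prod d"]) auto
  show rb: "radix d (insert b S) b = dimS d S"
    unfolding radix_def dimS_def using assms by (intro arg_cong[where f="prod d"]) auto
  show "dimS d (insert b S) = d b * dimS d S" unfolding dimS_def using assms bS by simp
  have "encode d (insert b S) x = x b * radix d (insert b S) b + (\<Sum>i\<in>S. x i * radix d (insert b S) i)"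
    unfolding encode_def using assms bS by simp
  also have "(\<Sum>i\<in>S. x i * radix d (insert b S) i) = encode d S x"
    unfolding encode_def using assms
    by (intro sum.cong) (auto simp: radix_def intro!: arg_cong[where f="prod d"])
  finally show "encode d (insert b S) x = encode d S x + x b * dimS d S" using rb by simp
qed

lemma index_facts:
  assumes "finite S" 
  shows "(\<forall>j\<in>S. 0 < d j) \<longrightarrow>
     (\<forall>x. (\<forall>i\<in>S. x i < d i) \<longrightarrow> encode d S x < dimS d S \<and> (\<forall>i\<in>S. decode d S (encode d S x) i = x i))
   \<and> (\<forall>k < dimS d S. encode d S (decode d S k) = k)"
  using assms
proof (induction S rule: finite_linorder_max_induct)
  case empty
  then show ?case by (simp add: encode_def dimS_def)
next
  case (insert b S)
  note F = insert_max_facts[OF insert(1,2)]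
  show ?case
  proof (intro impI conjI allI)
    assume pos: "\<forall>j\<in>insert b S. 0 < d j"
    then have posS: "\<forall>j\<in>S. 0 < d j" by auto
    have IH1: "\<And>x. (\<forall>i\<in>S. x i < d i) \<Longrightarrow> encode d S x < dimS d S \<and> (\<forall>i\<in>S. decode d S (encode d S x) i = x i)"
      and IH2: "\<And>k. k < dimS d S \<Longrightarrow> encode d S (decode d S k) = k" using insert(3) posS by auto
    have D: "0 < dimS d S" using dimS_pos[OF insert(1) posS] .
    have dsh: "decode d (insert b S) (a + m * dimS d S) i = decode d S a i" if "i \<in> S" for a m i
      unfolding decode_def F(1)[OF that] using decode_shift[OF insert(1) that radix_pos[OF insert(1) posS]] .
    {
      fix x assume xb: "\<forall>i\<in>insert b S. x i < d i"
      have e: "encode d S x < dimS d S" using IH1 xb by auto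
      have "encode d (insert b S) x < dimS d S + x b * dimS d S" using e F(4) by simp
      also have "\<dots> = (x b + 1) * dimS d S" by simp
      also have "\<dots> \<le> d b * dimS d S" using xb by (intro mult_right_mono) auto
      finally show "encode d (insert b S) x < dimS d (insert b S)" using F(3) by simp
      show "\<forall>i\<in>insert b S. decode d (insert b S) (encode d (insert b S) x) i = x i"
      proof
        fix i assume i: "i \<in> insert b S"
        show "decode d (insert b S) (encode d (insert b S) x) i = x i"
        proof (cases "i = b")
          case True
          have "(encode d S x + x b * dimS d S) div dimS d S = x b" using e D by simp
          then have "decode d (insert b S) (encode d (insert b S) x) b = x b mod d b"
            unfolding decode_def F(2) F(4) by simp
          then show ?thesis using True xb by simp
        next
          case False
          then have iS: "i \<in> S" using i by auto
          show ?thesis unfolding F(4) dsh[OF iS] using IH1 xb iS by auto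
        qed
      qed
    }
    {
      fix k assume k: "k < dimS d (insert b S)"
      have kb: "k div dimS d S < d b" using k F(3) D by (simp add: div_less_iff_less_mult mult.commute)
      have db: "decode d (insert b S) k b = k div dimS d S"
        unfolding decode_def F(2) using kb by simp
      have kk: "k = k mod dimS d S + (k div dimS d S) * dimS d S" using mod_div_mult_eq[of k "dimS d S"] by simp
      have "encode d S (decode d (insert b S) k) = encode d S (decode d S (k mod dimS d S))"
        by (rule encode_cong) (subst kk, rule dsh)
      also have "\<dots> = k mod dimS d S" using IH2 D by simp
      finally show "encode d (insert b S) (decode d (insert b S) k) = k"
        unfolding F(4) db using kk by simp
    }
  qed
qed



section \<open>Gram matrices\<close>

definition gram :: "nat \<Rightarrow> nat \<Rightarrow> (nat \<Rightarrow> nat \<Rightarrow> complex) \<Rightarrow> complex mat" where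
  "gram m p M = mat m m (\<lambda>(k,l). \<Sum>c<p. M k c * cnj (M l c))"

lemma gram_psd:
  "(\<Sum>i<m. \<Sum>j<m. cnj (v $ i) * gram m p M $$ (i,j) * v $ j) =
   (\<Sum>c<p. (\<Sum>i<m. cnj (v $ i) * M i c) * cnj (\<Sum>j<m. cnj (v $ j) * M j c))"
proof -
  have "(\<Sum>i<m. \<Sum>j<m. cnj (v $ i) * gram m p M $$ (i,j) * v $ j) =
        (\<Sum>i<m. \<Sum>j<m. \<Sum>c<p. cnj (v $ i) * M i c * (v $ j * cnj (M j c)))"
    by (intro sum.cong refl) (simp add: gram_def sum_distrib_left sum_distrib_right mult_ac)
  also have "\<dots> = (\<Sum>i<m. \<Sum>c<p. \<Sum>j<m. cnj (v $ i) * M i c * (v $ j * cnj (M j c)))"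
    by (rule sum.cong[OF refl]) (rule sum.swap)
  also have "\<dots> = (\<Sum>c<p. \<Sum>i<m. \<Sum>j<m. cnj (v $ i) * M i c * (v $ j * cnj (M j c)))"
    by (rule sum.swap)
  also have "\<dots> = (\<Sum>c<p. (\<Sum>i<m. cnj (v $ i) * M i c) * cnj (\<Sum>j<m. cnj (v $ j) * M j c))"
    by (simp add: sum_product)
  finally show ?thesis .
qed

lemma gram_density:
  assumes tr: "(\<Sum>k<m. \<Sum>c<p. M k c * cnj (M k c)) = 1"
  shows "is_density m (gram m p M)"
  unfolding is_density_def
proof (intro conjI allI impI)
  show "gram m p M \<in> carrier_mat m m" by (simp add: gram_def)
  fix i j assume "i < m" "j < m"
  then show "gram m p M $$ (i, j) = cnj (gram m p M $$ (j, i))"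
    by (simp add: gram_def mult.commute)
next
  fix v :: "complex vec"
  have "Re (\<Sum>i<m. \<Sum>j<m. cnj (v $ i) * gram m p M $$ (i, j) * v $ j) =
        (\<Sum>c<p. (cmod (\<Sum>i<m. cnj (v $ i) * M i c))^2)"
    unfolding gram_psd Re_sum by (intro sum.cong refl) (simp only: complex_norm_square[symmetric] Re_complex_of_real)
  also have "\<dots> \<ge> 0" by (intro sum_nonneg) simp
  finally show "0 \<le> Re (\<Sum>i<m. \<Sum>j<m. cnj (v $ i) * gram m p M $$ (i, j) * v $ j)" .
next
  show "(\<Sum>i<m. gram m p M $$ (i, i)) = 1" using tr by (simp add: gram_def)
qed

lemma lagrange:
  fixes A B :: "nat \<Rightarrow> complex"
  shows "(\<Sum>c\<in>I. \<Sum>c'\<in>I. (A c * B c' - A c' * B c) * cnj (A c * B c' - A c' * B c)) =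
     2 * ((\<Sum>c\<in>I. A c * cnj (A c)) * (\<Sum>c\<in>I. B c * cnj (B c))
        - (\<Sum>c\<in>I. A c * cnj (B c)) * (\<Sum>c\<in>I. B c * cnj (A c)))"
proof -
  have e: "(A c * B c' - A c' * B c) * cnj (A c * B c' - A c' * B c) =
      A c * cnj (A c) * (B c' * cnj (B c')) + A c' * cnj (A c') * (B c * cnj (B c))
      - A c * cnj (B c) * (B c' * cnj (A c')) - A c' * cnj (B c') * (B c * cnj (A c))" for c c'
    by (simp add: algebra_simps)
  have s1: "(\<Sum>c\<in>I. \<Sum>c'\<in>I. A c * cnj (A c) * (B c' * cnj (B c'))) = (\<Sum>c\<in>I. A c * cnj (A c)) * (\<Sum>c\<in>I. B c * cnj (B c))"
    by (simp add: sum_product)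
  have s2: "(\<Sum>c\<in>I. \<Sum>c'\<in>I. A c' * cnj (A c') * (B c * cnj (B c))) = (\<Sum>c\<in>I. A c * cnj (A c)) * (\<Sum>c\<in>I. B c * cnj (B c))"
    by (subst sum.swap) (simp add: sum_product)
  have s3: "(\<Sum>c\<in>I. \<Sum>c'\<in>I. A c * cnj (B c) * (B c' * cnj (A c'))) = (\<Sum>c\<in>I. A c * cnj (B c)) * (\<Sum>c\<in>I. B c * cnj (A c))"
    by (simp add: sum_product)
  have s4: "(\<Sum>c\<in>I. \<Sum>c'\<in>I. A c' * cnj (B c') * (B c * cnj (A c))) = (\<Sum>c\<in>I. A c * cnj (B c)) * (\<Sum>c\<in>I. B c * cnj (A c))"
    by (subst sum.swap) (simp add: sum_product)
  show ?thesis
    unfolding e sum_subtractf sum.distrib s1 s2 s3 s4 by (simp add: algebra_simps)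
qed

lemma gram_rank1_minor:
  assumes G: "gram m p M = mat m m (\<lambda>(i,j). v $ i * cnj (v $ j))"
    and k: "k < m" and l: "l < m" and c: "c < p" and c': "c' < p"
  shows "M k c * M l c' = M k c' * M l c"
proof -
  have g: "(\<Sum>c<p. M i c * cnj (M j c)) = v $ i * cnj (v $ j)" if "i < m" "j < m" for i j
    using arg_cong[OF G, of "\<lambda>X. X $$ (i,j)"] that by (simp add: gram_def)
  define z where "z = (\<lambda>c c'. M k c * M l c' - M k c' * M l c)"
  have "(\<Sum>c<p. \<Sum>c'<p. z c c' * cnj (z c c')) =
      2 * ((v$k*cnj(v$k))*(v$l*cnj(v$l)) - (v$k*cnj(v$l))*(v$l*cnj(v$k)))"
    unfolding z_def lagrange g[OF k k] g[OF l l] g[OF k l] g[OF l k] ..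
  also have "\<dots> = 0" by (simp add: algebra_simps)
  finally have Z: "(\<Sum>c<p. \<Sum>c'<p. z c c' * cnj (z c c')) = 0" .
  have "complex_of_real (\<Sum>c<p. \<Sum>c'<p. (cmod (z c c'))^2) = (\<Sum>c<p. \<Sum>c'<p. z c c' * cnj (z c c'))"
    by (simp only: of_real_sum complex_norm_square)
  then have R: "(\<Sum>c<p. \<Sum>c'<p. (cmod (z c c'))^2) = 0" using Z by (metis of_real_eq_0_iff)
  have "(\<Sum>c'<p. (cmod (z c c'))^2) = 0"
    using R c by (subst (asm) sum_nonneg_eq_0_iff) (auto intro: sum_nonneg)
  then have "(cmod (z c c'))^2 = 0"
    using c' by (subst (asm) sum_nonneg_eq_0_iff) auto
  then show ?thesis unfolding z_def by simp
qed

lemma gram_product_pure: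
  assumes ab: "\<And>k c. k < m \<Longrightarrow> c < p \<Longrightarrow> M k c = a k * b c"
    and D: "is_density m (gram m p M)"
  shows "is_pure_density m (gram m p M)"
  unfolding is_pure_density_def
proof (intro conjI exI)
  show "is_density m (gram m p M)" by (rule D)
  define N where "N = (\<Sum>c<p. (cmod (b c))^2)"
  have N0: "N \<ge> 0" unfolding N_def by (intro sum_nonneg) simp
  define v where "v = vec m (\<lambda>k. complex_of_real (sqrt N) * a k)"
  show "dim_vec v = m" unfolding v_def by simp
  show "gram m p M = mat m m (\<lambda>(i, j). v $ i * cnj (v $ j))"
  proof (rule eq_matI)
    fix i j assume i: "i < dim_row (mat m m (\<lambda>(i, j). v $ i * cnj (v $ j)))"
      and j: "j < dim_col (mat m m (\<lambda>(i, j). v $ i * cnj (v $ j)))"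
    then have im: "i < m" and jm: "j < m" by auto
    have "(\<Sum>c<p. M i c * cnj (M j c)) = (\<Sum>c<p. a i * cnj (a j) * (b c * cnj (b c)))"
      by (intro sum.cong refl) (simp add: ab im jm mult_ac)
    also have "\<dots> = a i * cnj (a j) * complex_of_real N"
      unfolding N_def sum_distrib_left[symmetric] of_real_sum complex_norm_square ..
    also have "\<dots> = v $ i * cnj (v $ j)"
    proof -
      have "complex_of_real (sqrt N) * cnj (complex_of_real (sqrt N)) = complex_of_real N"
        using N0 by (simp flip: of_real_mult)
      then show ?thesis unfolding v_def using im jm
        by (simp add: mult_ac)
    qed
    finally show "gram m p M $$ (i, j) = mat m m (\<lambda>(i, j). v $ i * cnj (v $ j)) $$ (i, j)"
      using im jm by (simp add: gram_def)
  qed (simp_all add: gram_def)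
qed

section \<open>Factorization predicates on assignments\<close>

definition mix :: "nat set \<Rightarrow> (nat \<Rightarrow> nat) \<Rightarrow> (nat \<Rightarrow> nat) \<Rightarrow> nat \<Rightarrow> nat" where
  "mix S x y = (\<lambda>i. if i \<in> S then x i else y i)"

definition FS :: "((nat \<Rightarrow> nat) \<Rightarrow> complex) \<Rightarrow> (nat \<Rightarrow> nat) set \<Rightarrow> nat set \<Rightarrow> (nat \<Rightarrow> nat) \<Rightarrow> bool" where
  "FS P B S x0 \<longleftrightarrow> (\<forall>x\<in>B. P x * P x0 = P (mix S x x0) * P (mix S x0 x))"

lemma FS_compl: "FS P B S x0 \<Longrightarrow> FS P B (- S) x0"
proof -
  have "mix (-S) x y = mix S y x" for x y unfolding mix_def by auto
  then show "FS P B S x0 \<Longrightarrow> FS P B (- S) x0" unfolding FS_def by (simp add: mult.commute)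
qed

lemma FS_inter:
  assumes P0: "P x0 \<noteq> 0" and x0: "x0 \<in> B" and cl: "\<forall>S x y. x \<in> B \<longrightarrow> y \<in> B \<longrightarrow> mix S x y \<in> B"
    and FA: "FS P B A x0" and FB: "FS P B A' x0"
  shows "FS P B (A \<inter> A') x0"
  unfolding FS_def
proof
  fix x assume x: "x \<in> B"
  define u where "u = mix A x x0"
  define w where "w = mix A x0 x"
  define y where "y = mix (A \<inter> A') x0 x"
  define I where "I = mix (A \<inter> A') x x0"
  define D where "D = mix (A - A') x x0"
  have uB: "u \<in> B" "y \<in> B" unfolding u_def y_def using cl x x0 by auto
  have h1: "P x * P x0 = P u * P w" using FA x unfolding FS_def u_def w_def by auto
  have m1: "mix A' u x0 = I" "mix A' x0 u = D" unfolding u_def I_def D_def mix_def by auto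
  have h2: "P u * P x0 = P I * P D" using FB uB unfolding FS_def m1[symmetric] by auto
  have m2: "mix A y x0 = D" "mix A x0 y = w" unfolding y_def w_def D_def mix_def by auto
  have h3: "P y * P x0 = P D * P w" using FA uB unfolding FS_def m2[symmetric] by auto
  have "P x * P x0 * P x0 = P I * (P y * P x0)"
  proof -
    have "P x * P x0 * P x0 = (P u * P x0) * P w" using h1 by (simp add: mult_ac)
    also have "\<dots> = P I * (P D * P w)" using h2 by (simp add: mult_ac)
    also have "\<dots> = P I * (P y * P x0)" using h3 by simp
    finally show ?thesis .
  qed
  then have "P x * P x0 = P I * P y" using P0 by (simp add: mult_ac)
  then show "P x * P x0 = P (mix (A \<inter> A') x x0) * P (mix (A \<inter> A') x0 x)"
    unfolding I_def y_def .
qed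

lemma FS_cong: "FS P B S x0 \<Longrightarrow> (\<And>x y. P (mix S x y) = P (mix S' x y)) \<Longrightarrow> FS P B S' x0"
  unfolding FS_def by simp


lemma idx_corr:
  assumes "finite S" "\<forall>j\<in>S. 0 < d j"
  shows "(\<forall>i\<in>S. x i < d i) \<Longrightarrow> encode d S x < dimS d S"
    and "(\<forall>i\<in>S. x i < d i) \<Longrightarrow> i \<in> S \<Longrightarrow> decode d S (encode d S x) i = x i"
    and "k < dimS d S \<Longrightarrow> encode d S (decode d S k) = k"
  using index_facts[OF assms(1), of d] assms(2) by auto

lemma decode_lt: "0 < d i \<Longrightarrow> decode d S k i < d i"
  by (simp add: decode_def)

definition Psi :: "nat \<Rightarrow> (nat \<Rightarrow> nat) \<Rightarrow> complex vec \<Rightarrow> (nat \<Rightarrow> nat) \<Rightarrow> complex" where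
  "Psi n d \<psi> x = \<psi> $ encode d {0..<n} x"

definition box :: "nat \<Rightarrow> (nat \<Rightarrow> nat) \<Rightarrow> (nat \<Rightarrow> nat) set" where
  "box n d = {x. \<forall>i<n. x i < d i}"

definition mrg :: "nat \<Rightarrow> (nat \<Rightarrow> nat) \<Rightarrow> nat set \<Rightarrow> nat \<Rightarrow> nat \<Rightarrow> nat \<Rightarrow> nat" where
  "mrg n d S k c = (\<lambda>i. if i \<in> S then decode d S k i else decode d ({0..<n} - S) c i)"

definition Mx :: "nat \<Rightarrow> (nat \<Rightarrow> nat) \<Rightarrow> complex vec \<Rightarrow> nat set \<Rightarrow> nat \<Rightarrow> nat \<Rightarrow> complex" where
  "Mx n d \<psi> S k c = \<psi> $ encode d {0..<n} (mrg n d S k c)"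

lemma reduced_state_gram:
  "reduced_state n d \<psi> S = gram (dimS d S) (dimS d ({0..<n} - S)) (Mx n d \<psi> S)"
  unfolding reduced_state_def gram_def Mx_def mrg_def Let_def ..

lemma Psi_cong: "(\<And>i. i < n \<Longrightarrow> x i = y i) \<Longrightarrow> Psi n d \<psi> x = Psi n d \<psi> y"
  unfolding Psi_def by (subst encode_cong[of "{0..<n}" x y]) auto

lemma box_mix: "x \<in> box n d \<Longrightarrow> y \<in> box n d \<Longrightarrow> mix S x y \<in> box n d"
  unfolding box_def mix_def by auto

lemma mrg_lt:
  assumes pos: "\<forall>i<n. 0 < d i"
  shows "\<forall>i\<in>{0..<n}. mrg n d S k c i < d i"
  using pos unfolding mrg_def by (auto intro: decode_lt)

lemma decode_mrg:
  assumes pos: "\<forall>i<n. 0 < d i" and i: "i < n"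
  shows "decode d {0..<n} (encode d {0..<n} (mrg n d S k c)) i = mrg n d S k c i"
  using idx_corr(2)[of "{0..<n}" d "mrg n d S k c" i] pos i mrg_lt[OF pos] by auto

lemma Mx_enc:
  assumes pos: "\<forall>i<n. 0 < d i" and S: "S \<subseteq> {0..<n}" and x: "x \<in> box n d" and y: "y \<in> box n d"
  shows "Mx n d \<psi> S (encode d S x) (encode d ({0..<n} - S) y) = Psi n d \<psi> (mix S x y)"
proof -
  have fS: "finite S" using S finite_subset by blast
  have pS: "\<forall>j\<in>S. 0 < d j" using S pos by auto
  have pC: "\<forall>j\<in>{0..<n} - S. 0 < d j" using pos by auto
  show ?thesis unfolding Mx_def Psi_def
  proof (intro arg_cong[where f="\<lambda>j. \<psi> $ j"] encode_cong)
    fix i assume i: "i \<in> {0..<n}"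
    show "mrg n d S (encode d S x) (encode d ({0..<n} - S) y) i = mix S x y i"
    proof (cases "i \<in> S")
      case True
      have "\<forall>i\<in>S. x i < d i" using S x unfolding box_def by auto
      then show ?thesis unfolding mrg_def mix_def using idx_corr(2)[OF fS pS, of x i] True by auto
    next
      case False
      then show ?thesis unfolding mrg_def mix_def
        using idx_corr(2)[of "{0..<n} - S" d y i] pC y i unfolding box_def by auto
    qed
  qed
qed

lemma idx_bij:
  assumes pos: "\<forall>i<n. 0 < d i" and S: "S \<subseteq> {0..<n}"
  shows "bij_betw (\<lambda>(k,c). encode d {0..<n} (mrg n d S k c))
           ({..<dimS d S} \<times> {..<dimS d ({0..<n} - S)}) {..<dimS d {0..<n}}"
proof -
  let ?C = "{0..<n} - S"
  have fS: "finite S" using S finite_subset by blast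
  have pS: "\<forall>j\<in>S. 0 < d j" using S pos by auto
  have pC: "\<forall>j\<in>?C. 0 < d j" using pos by auto
  have pN: "\<forall>j\<in>{0..<n}. 0 < d j" using pos by auto
  define g where "g = (\<lambda>j. (encode d S (decode d {0..<n} j), encode d ?C (decode d {0..<n} j)))"
  show ?thesis
  proof (rule bij_betw_byWitness[where f'=g])
    show "\<forall>a\<in>{..<dimS d S} \<times> {..<dimS d ?C}. g ((\<lambda>(k,c). encode d {0..<n} (mrg n d S k c)) a) = a"
    proof
      fix a assume a: "a \<in> {..<dimS d S} \<times> {..<dimS d ?C}"
      obtain k c where kc: "a = (k,c)" "k < dimS d S" "c < dimS d ?C" using a by auto
      have dm: "decode d {0..<n} (encode d {0..<n} (mrg n d S k c)) i = mrg n d S k c i" if "i < n" for i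
        using decode_mrg[OF pos that] .
      have "encode d S (decode d {0..<n} (encode d {0..<n} (mrg n d S k c))) = encode d S (decode d S k)"
      proof (intro encode_cong)
        fix i assume i: "i \<in> S"
        then have "i < n" using S by auto
        then show "decode d {0..<n} (encode d {0..<n} (mrg n d S k c)) i = decode d S k i"
          unfolding dm[OF \<open>i < n\<close>] using i by (simp add: mrg_def)
      qed
      also have "\<dots> = k" using idx_corr(3)[OF fS pS] kc by auto
      finally have 1: "encode d S (decode d {0..<n} (encode d {0..<n} (mrg n d S k c))) = k" .
      have "encode d ?C (decode d {0..<n} (encode d {0..<n} (mrg n d S k c))) = encode d ?C (decode d ?C c)"
      proof (intro encode_cong)
        fix i assume i: "i \<in> ?C"
        then have "i < n" by auto
        then show "decode d {0..<n} (encode d {0..<n} (mrg n d S k c)) i = decode d ?C c i"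
          unfolding dm[OF \<open>i < n\<close>] using i by (simp add: mrg_def)
      qed
      also have "\<dots> = c" using idx_corr(3)[of ?C d c] pC kc by auto
      finally show "g ((\<lambda>(k,c). encode d {0..<n} (mrg n d S k c)) a) = a"
        unfolding g_def kc using 1 by simp
    qed
    show "\<forall>a'\<in>{..<dimS d {0..<n}}. (\<lambda>(k,c). encode d {0..<n} (mrg n d S k c)) (g a') = a'"
    proof
      fix j assume j: "j \<in> {..<dimS d {0..<n}}"
      have dl: "decode d {0..<n} j i < d i" if "i < n" for i using pos that by (auto intro: decode_lt)
      have "encode d {0..<n} (mrg n d S (encode d S (decode d {0..<n} j)) (encode d ?C (decode d {0..<n} j)))
            = encode d {0..<n} (decode d {0..<n} j)"
      proof (intro encode_cong)
        fix i assume i: "i \<in> {0..<n}"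
        show "mrg n d S (encode d S (decode d {0..<n} j)) (encode d ?C (decode d {0..<n} j)) i = decode d {0..<n} j i"
        proof (cases "i \<in> S")
          case True
          have "\<forall>i\<in>S. decode d {0..<n} j i < d i"
          proof
            fix i assume "i \<in> S" then have "i < n" using S by auto
            then show "decode d {0..<n} j i < d i" by (rule dl)
          qed
          then show ?thesis unfolding mrg_def
            using idx_corr(2)[OF fS pS, of "decode d {0..<n} j" i] True by auto
        next
          case False
          then show ?thesis unfolding mrg_def
            using idx_corr(2)[of ?C d "decode d {0..<n} j" i] pC dl i by auto
        qed
      qed
      also have "\<dots> = j" using idx_corr(3)[of "{0..<n}" d j] pN j by auto
      finally show "(\<lambda>(k,c). encode d {0..<n} (mrg n d S k c)) (g j) = j" unfolding g_def by simp
    qed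
    show "(\<lambda>(k,c). encode d {0..<n} (mrg n d S k c)) ` ({..<dimS d S} \<times> {..<dimS d ?C}) \<subseteq> {..<dimS d {0..<n}}"
      using idx_corr(1)[of "{0..<n}" d] pN mrg_lt[OF pos] by auto
    show "g ` {..<dimS d {0..<n}} \<subseteq> {..<dimS d S} \<times> {..<dimS d ?C}"
    proof
      fix a assume "a \<in> g ` {..<dimS d {0..<n}}"
      then obtain j where a: "a = g j" by auto
      have dl: "decode d {0..<n} j i < d i" if "i < n" for i using pos that by (auto intro: decode_lt)
      have "\<forall>i\<in>S. decode d {0..<n} j i < d i"
      proof
        fix i assume "i \<in> S" then have "i < n" using S by auto
        then show "decode d {0..<n} j i < d i" by (rule dl)
      qed
      then have "encode d S (decode d {0..<n} j) < dimS d S"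
        using idx_corr(1)[OF fS pS] by auto
      moreover have "encode d ?C (decode d {0..<n} j) < dimS d ?C"
        using idx_corr(1)[of ?C d] pC dl by auto
      ultimately show "a \<in> {..<dimS d S} \<times> {..<dimS d ?C}" unfolding a g_def by auto
    qed
  qed
qed

lemma Mx_trace:
  assumes pos: "\<forall>i<n. 0 < d i" and S: "S \<subseteq> {0..<n}" and ps: "is_pure_state n d \<psi>"
  shows "(\<Sum>k<dimS d S. \<Sum>c<dimS d ({0..<n} - S). Mx n d \<psi> S k c * cnj (Mx n d \<psi> S k c)) = 1"
proof -
  let ?g = "\<lambda>j. \<psi> $ j * cnj (\<psi> $ j)"
  have "(\<Sum>k<dimS d S. \<Sum>c<dimS d ({0..<n} - S). Mx n d \<psi> S k c * cnj (Mx n d \<psi> S k c))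
      = (\<Sum>a\<in>{..<dimS d S} \<times> {..<dimS d ({0..<n} - S)}. ?g ((\<lambda>(k,c). encode d {0..<n} (mrg n d S k c)) a))"
    unfolding sum.cartesian_product Mx_def by (intro sum.cong refl) auto
  also have "\<dots> = (\<Sum>j<dimS d {0..<n}. ?g j)"
    by (rule sum.reindex_bij_betw[OF idx_bij[OF pos S]])
  also have "\<dots> = complex_of_real (\<Sum>j<dim_vec \<psi>. (cmod (\<psi> $ j))^2)"
  proof -
    have dv: "dim_vec \<psi> = dimS d {0..<n}" using ps unfolding is_pure_state_def by simp
    show ?thesis unfolding dv of_real_sum complex_norm_square ..
  qed
  also have "\<dots> = 1"
  proof -
    have "(\<Sum>j<dim_vec \<psi>. (cmod (\<psi> $ j))^2) = 1" using ps unfolding is_pure_state_def by blast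
    then show ?thesis by (simp only: of_real_1)
  qed
  finally show ?thesis .
qed

lemma rs_density:
  assumes pos: "\<forall>i<n. 0 < d i" and S: "S \<subseteq> {0..<n}" and ps: "is_pure_state n d \<psi>"
  shows "is_density (dimS d S) (reduced_state n d \<psi> S)"
  unfolding reduced_state_gram by (rule gram_density[OF Mx_trace[OF pos S ps]])

lemma rs_pure_FS:
  assumes pos: "\<forall>i<n. 0 < d i" and S: "S \<subseteq> {0..<n}"
    and pure: "is_pure_density (dimS d S) (reduced_state n d \<psi> S)" and x0: "x0 \<in> box n d"
  shows "FS (Psi n d \<psi>) (box n d) S x0"
  unfolding FS_def
proof
  fix x assume x: "x \<in> box n d"
  let ?C = "{0..<n} - S"
  have fS: "finite S" using S finite_subset by blast
  have pS: "\<forall>j\<in>S. 0 < d j" using S pos by auto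
  have pC: "\<forall>j\<in>?C. 0 < d j" using pos by auto
  obtain v where G: "gram (dimS d S) (dimS d ?C) (Mx n d \<psi> S) = mat (dimS d S) (dimS d S) (\<lambda>(i,j). v $ i * cnj (v $ j))"
    using pure unfolding is_pure_density_def reduced_state_gram by auto
  have lt: "encode d S z < dimS d S" "encode d ?C z < dimS d ?C" if "z \<in> box n d" for z
  proof -
    have "\<forall>i\<in>S. z i < d i" "\<forall>i\<in>?C. z i < d i" using S that unfolding box_def by auto
    then show "encode d S z < dimS d S" "encode d ?C z < dimS d ?C"
      using idx_corr(1)[OF fS pS, of z] idx_corr(1)[of ?C d z] pC by auto
  qed
  have "Mx n d \<psi> S (encode d S x) (encode d ?C x) * Mx n d \<psi> S (encode d S x0) (encode d ?C x0)
      = Mx n d \<psi> S (encode d S x) (encode d ?C x0) * Mx n d \<psi> S (encode d S x0) (encode d ?C x)"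
    by (rule gram_rank1_minor[OF G]) (use lt x x0 in auto)
  moreover have "mix S z z = z" for z unfolding mix_def by auto
  ultimately show "Psi n d \<psi> x * Psi n d \<psi> x0 = Psi n d \<psi> (mix S x x0) * Psi n d \<psi> (mix S x0 x)"
    using Mx_enc[OF pos S] x x0 by metis
qed

lemma FS_cong_N:
  assumes "FS (Psi n d \<psi>) B S x0" "\<And>j. j < n \<Longrightarrow> j \<in> S \<longleftrightarrow> j \<in> S'"
  shows "FS (Psi n d \<psi>) B S' x0"
  using assms(1)
proof (rule FS_cong)
  fix x y show "Psi n d \<psi> (mix S x y) = Psi n d \<psi> (mix S' x y)"
    by (rule Psi_cong) (use assms(2) in \<open>auto simp: mix_def\<close>)
qed

lemma fs_Mx_prod:
  assumes pos: "\<forall>i<n. 0 < d i" and S: "S \<subseteq> {0..<n}"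
    and \<phi>: "\<forall>k<dimS d {0..<n}. \<psi> $ k = (\<Prod>i<n. \<phi> i $ decode d {0..<n} k i)"
    and k: "k < dimS d S" and c: "c < dimS d ({0..<n} - S)"
  shows "Mx n d \<psi> S k c = (\<Prod>i\<in>{..<n} \<inter> {i. i \<in> S}. \<phi> i $ decode d S k i)
                         * (\<Prod>i\<in>{..<n} \<inter> - {i. i \<in> S}. \<phi> i $ decode d ({0..<n} - S) c i)"
proof -
  have pN: "\<forall>j\<in>{0..<n}. 0 < d j" using pos by auto
  have lt: "encode d {0..<n} (mrg n d S k c) < dimS d {0..<n}"
    using idx_corr(1)[of "{0..<n}" d] pN mrg_lt[OF pos] by auto
  have "Mx n d \<psi> S k c = (\<Prod>i<n. \<phi> i $ mrg n d S k c i)"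
    unfolding Mx_def using \<phi> lt decode_mrg[OF pos] by simp
  also have "\<dots> = (\<Prod>i<n. if i \<in> S then \<phi> i $ decode d S k i else \<phi> i $ decode d ({0..<n} - S) c i)"
    unfolding mrg_def by (intro prod.cong refl) auto
  also have "\<dots> = (\<Prod>i\<in>{..<n} \<inter> {i. i \<in> S}. \<phi> i $ decode d S k i)
                         * (\<Prod>i\<in>{..<n} \<inter> - {i. i \<in> S}. \<phi> i $ decode d ({0..<n} - S) c i)"
    by (rule prod.If_cases) simp
  finally show ?thesis .
qed


lemma singles_sep:
  assumes pos: "\<forall>i<n. 0 < d i" and x0: "x0 \<in> box n d" and P0: "Psi n d \<psi> x0 \<noteq> 0"
    and F: "\<And>i. i < n \<Longrightarrow> FS (Psi n d \<psi>) (box n d) {i} x0" and n: "0 < n"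
  shows "fully_separable n d \<psi>"
proof -
  let ?P = "Psi n d \<psi>"
  have ind: "m \<le> n \<Longrightarrow> ?P x * ?P x0 ^ m = ?P (mix {0..<m} x0 x) * (\<Prod>i<m. ?P (x0(i := x i)))"
    if x: "x \<in> box n d" for x m
  proof (induction m)
    case 0 then show ?case by (simp add: mix_def)
  next
    case (Suc m)
    define z where "z = mix {0..<m} x0 x"
    have zB: "z \<in> box n d" unfolding z_def using box_mix x0 x by blast
    have e1: "mix {m} z x0 = x0(m := x m)" unfolding z_def mix_def by (rule ext) auto
    have e2: "mix {m} x0 z = mix {0..<Suc m} x0 x" unfolding z_def mix_def by (rule ext) auto
    have Fm: "?P z * ?P x0 = ?P (x0(m := x m)) * ?P (mix {0..<Suc m} x0 x)"
      using F[of m] Suc.prems zB unfolding FS_def e1[symmetric] e2[symmetric] by auto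
    have "?P x * ?P x0 ^ Suc m = (?P x * ?P x0 ^ m) * ?P x0" by simp
    also have "\<dots> = (?P z * ?P x0) * (\<Prod>i<m. ?P (x0(i := x i)))"
    proof -
      have IH: "?P x * ?P x0 ^ m = ?P z * (\<Prod>i<m. ?P (x0(i := x i)))"
        unfolding z_def by (rule Suc.IH) (use Suc.prems in simp)
      show ?thesis unfolding IH by (simp only: mult_ac)
    qed
    also have "\<dots> = ?P (mix {0..<Suc m} x0 x) * (\<Prod>i<Suc m. ?P (x0(i := x i)))"
      unfolding Fm by (simp add: mult_ac)
    finally show ?case .
  qed
  have main: "?P x * ?P x0 ^ n = ?P x0 * (\<Prod>i<n. ?P (x0(i := x i)))" if x: "x \<in> box n d" for x
  proof -
    have "?P (mix {0..<n} x0 x) = ?P x0" by (rule Psi_cong) (simp add: mix_def)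
    then show ?thesis using ind[OF x, of n] by simp
  qed
  define c where "c = inverse (?P x0 ^ (n - 1))"
  define \<phi> where "\<phi> = (\<lambda>i. vec (d i) (\<lambda>a. (if i = 0 then c else 1) * ?P (x0(i := a))))"
  show ?thesis unfolding fully_separable_def
  proof (intro exI conjI allI impI)
    fix i assume "i < n" then show "dim_vec (\<phi> i) = d i" unfolding \<phi>_def by simp
  next
    fix k assume k: "k < dimS d {0..<n}"
    define x where "x = decode d {0..<n} k"
    have pN: "\<forall>j\<in>{0..<n}. 0 < d j" using pos by auto
    have xB: "x \<in> box n d" unfolding box_def x_def using pos by (auto intro: decode_lt)
    have psik: "\<psi> $ k = ?P x" unfolding Psi_def x_def using idx_corr(3)[OF _ pN k] by simp
    have "(\<Prod>i<n. \<phi> i $ x i) = (\<Prod>i<n. (if i = 0 then c else 1) * ?P (x0(i := x i)))"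
      using xB unfolding \<phi>_def box_def by (intro prod.cong refl) auto
    also have "\<dots> = c * (\<Prod>i<n. ?P (x0(i := x i)))"
      unfolding prod.distrib using n by (simp add: prod.delta)
    also have "\<dots> = ?P x"
    proof -
      have pw: "?P x0 ^ n = ?P x0 * ?P x0 ^ (n - 1)" using n by (cases n) simp_all
      have "?P x0 * (?P x * ?P x0 ^ (n - 1)) = ?P x0 * (\<Prod>i<n. ?P (x0(i := x i)))"
        using main[OF xB] unfolding pw by (simp add: mult_ac)
      then have "?P x * ?P x0 ^ (n - 1) = (\<Prod>i<n. ?P (x0(i := x i)))" using P0 by simp
      then have E: "(\<Prod>i<n. ?P (x0(i := x i))) = ?P x * ?P x0 ^ (n - 1)" ..
      have Q: "?P x0 ^ (n - 1) \<noteq> 0" using P0 by simp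
      show ?thesis unfolding c_def E using Q by simp
    qed
    finally show "\<psi> $ k = (\<Prod>i<n. \<phi> i $ decode d {0..<n} k i)" unfolding psik x_def by simp
  qed
qed

theorem mainTheorem4:
  fixes h :: "complex mat \<Rightarrow> real" and n :: nat and d :: "nat \<Rightarrow> nat" and \<psi> :: "complex vec"
  assumes "reduced_function h" and "n \<ge> 4" and "is_pure_state n d \<psi>"
  shows "E_single h n d \<psi> \<le> E_family h n d \<psi>
    \<and> (E_single h n d \<psi> < E_family h n d \<psi> \<longleftrightarrow> \<not> fully_separable n d \<psi>)"
proof -
  have hpos: "\<And>m A. is_density m A \<Longrightarrow> 0 \<le> h A"
    and hzero: "\<And>m A. is_density m A \<Longrightarrow> (h A = 0 \<longleftrightarrow> is_pure_density m A)"
    using assms(1) unfolding reduced_function_def by blast+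
  have dv: "dim_vec \<psi> = dimS d {0..<n}" and ssum: "(\<Sum>k<dim_vec \<psi>. (cmod (\<psi> $ k))^2) = 1"
    using assms(3) unfolding is_pure_state_def by auto
  have "\<exists>k0<dim_vec \<psi>. \<psi> $ k0 \<noteq> 0"
  proof (rule ccontr)
    assume "\<not> (\<exists>k0<dim_vec \<psi>. \<psi> $ k0 \<noteq> 0)"
    then have "(\<Sum>k<dim_vec \<psi>. (cmod (\<psi> $ k))^2) = 0" by simp
    then show False using ssum by simp
  qed
  then obtain k0 where k0: "k0 < dimS d {0..<n}" "\<psi> $ k0 \<noteq> 0" using dv by auto
  have pos: "\<forall>i<n. 0 < d i"
  proof (intro allI impI)
    fix i assume i: "i < n"
    show "0 < d i"
    proof (rule ccontr)
      assume "\<not> 0 < d i"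
      then have "dimS d {0..<n} = 0" unfolding dimS_def using i by (intro prod_zero) auto
      then show False using k0 by simp
    qed
  qed
  have pN: "\<forall>j\<in>{0..<n}. 0 < d j" using pos by auto
  define x0 where "x0 = decode d {0..<n} k0"
  have x0B: "x0 \<in> box n d" unfolding box_def x0_def using pos by (auto intro: decode_lt)
  have P0: "Psi n d \<psi> x0 \<noteq> 0" unfolding Psi_def x0_def using idx_corr(3)[OF _ pN k0(1)] k0(2) by simp
  have dens: "\<And>S. S \<subseteq> {0..<n} \<Longrightarrow> is_density (dimS d S) (reduced_state n d \<psi> S)"
    using rs_density[OF pos _ assms(3)] .
  let ?T = "T_family n"
  let ?Sing = "(\<lambda>i. {i}) ` {..<n}"
  have Tsub: "?T \<subseteq> Pow {0..<n}" unfolding T_family_def by auto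
  have finT: "finite ?T" using Tsub finite_subset by blast
  have SingT: "?Sing \<subseteq> ?T" unfolding T_family_def using assms(2) by auto
  have sing: "(\<Sum>S\<in>?Sing. h (reduced_state n d \<psi> S)) = (\<Sum>i<n. h (reduced_state n d \<psi> {i}))"
    by (subst sum.reindex) (auto simp: inj_on_def)
  define R where "R = (\<Sum>S\<in>?T - ?Sing. h (reduced_state n d \<psi> S))"
  have hS: "0 \<le> h (reduced_state n d \<psi> S)" if "S \<in> ?T - ?Sing" for S
    using hpos[OF dens] that Tsub by auto
  have Rnn: "0 \<le> R" unfolding R_def by (intro sum_nonneg hS)
  have EF: "E_family h n d \<psi> = E_single h n d \<psi> + R / 2"
    unfolding E_family_def E_single_def R_def sum.subset_diff[OF SingT finT] sing by simp
  have fsR: "R = 0" if fs: "fully_separable n d \<psi>"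
  proof -
    obtain \<phi> where \<phi>: "\<forall>k<dimS d {0..<n}. \<psi> $ k = (\<Prod>i<n. \<phi> i $ decode d {0..<n} k i)"
      using fs unfolding fully_separable_def by auto
    have "h (reduced_state n d \<psi> S) = 0" if S: "S \<in> ?T - ?Sing" for S
    proof -
      have SN: "S \<subseteq> {0..<n}" using S Tsub by auto
      have "is_pure_density (dimS d S) (reduced_state n d \<psi> S)"
        unfolding reduced_state_gram
        by (rule gram_product_pure[OF fs_Mx_prod[OF pos SN \<phi>]])
           (use dens[OF SN] in \<open>simp_all add: reduced_state_gram\<close>)
      then show ?thesis using hzero[OF dens[OF SN]] by simp
    qed
    then show ?thesis unfolding R_def by simp
  qed
  have nfsR: "0 < R" if nfs: "\<not> fully_separable n d \<psi>"
  proof (rule ccontr)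
    assume "\<not> 0 < R"
    then have "R = 0" using Rnn by simp
    then have "\<forall>S\<in>?T - ?Sing. h (reduced_state n d \<psi> S) = 0"
      unfolding R_def using finT hS by (subst (asm) sum_nonneg_eq_0_iff) auto
    then have FT: "FS (Psi n d \<psi>) (box n d) S x0" if S: "S \<in> ?T - ?Sing" for S
    proof -
      have SN: "S \<subseteq> {0..<n}" using S Tsub by auto
      have "is_pure_density (dimS d S) (reduced_state n d \<psi> S)"
        using hzero[OF dens[OF SN]] S \<open>\<forall>S\<in>?T - ?Sing. h (reduced_state n d \<psi> S) = 0\<close> by auto
      then show ?thesis by (rule rs_pure_FS[OF pos SN _ x0B])
    qed
    have mem: "{a, b} \<in> ?T - ?Sing" if "a < b" "b < n" "4 < n \<or> b < 3" for a b
    proof -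
      have c2: "card {a, b} = 2" using that by simp
      have "{a, b} \<noteq> {i}" for i using that by (auto simp: doubleton_eq_iff)
      then show ?thesis unfolding T_family_def using that assms(2) c2 by auto
    qed
    have cl: "\<forall>S x y. x \<in> box n d \<longrightarrow> y \<in> box n d \<longrightarrow> mix S x y \<in> box n d" using box_mix by blast
    note inter = FS_inter[where P="Psi n d \<psi>" and B="box n d", OF P0 x0B cl]
    have F01: "FS (Psi n d \<psi>) (box n d) {0, 1} x0" using FT mem[of 0 1] assms(2) by simp
    have F02: "FS (Psi n d \<psi>) (box n d) {0, 2} x0" using FT mem[of 0 2] assms(2) by simp
    have F12: "FS (Psi n d \<psi>) (box n d) {1, 2} x0" using FT mem[of 1 2] assms(2) by simp
    have F0: "FS (Psi n d \<psi>) (box n d) {0} x0"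
      by (rule FS_cong_N[OF inter[OF F01 F02]]) auto
    have F1: "FS (Psi n d \<psi>) (box n d) {1} x0"
      by (rule FS_cong_N[OF inter[OF F01 F12]]) auto
    have F2: "FS (Psi n d \<psi>) (box n d) {2} x0"
      by (rule FS_cong_N[OF inter[OF F02 F12]]) auto
    have Fi: "FS (Psi n d \<psi>) (box n d) {i} x0" if i: "i < n" for i
    proof -
      consider "i = 0" | "i = 1" | "i = 2" | "3 \<le> i" "n = 4" | "3 \<le> i" "4 < n" using assms(2) by linarith
      then show ?thesis
      proof cases
        case 4
        have "FS (Psi n d \<psi>) (box n d) (- {0, 1} \<inter> - {2}) x0"
          by (rule inter[OF FS_compl[OF F01] FS_compl[OF F2]])
        then show ?thesis by (rule FS_cong_N) (use 4 i in auto)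
      next
        case 5
        have "FS (Psi n d \<psi>) (box n d) {0, i} x0" using FT mem[of 0 i] 5 i by simp
        then have "FS (Psi n d \<psi>) (box n d) ({0, i} \<inter> - {0}) x0"
          by (rule inter[OF _ FS_compl[OF F0]])
        then show ?thesis by (rule FS_cong_N) (use 5 in auto)
      qed (use F0 F1 F2 in simp_all)
    qed
    have "fully_separable n d \<psi>"
      by (rule singles_sep[OF pos x0B P0 Fi]) (use assms(2) in simp_all)
    then show False using nfs by simp
  qed
  show ?thesis using EF Rnn fsR nfsR by auto
qed

end
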